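(* Let $\beta_1>0$ and $\beta_2>0$ be constants. There exist constants $c,C>0$ and $n_0$, depending only on $\beta_1,\beta_2$, such that for every $n\ge n_0$ and every $(\beta_1,\beta_2)$-constrained triangle-free graph $\mathbb{P}$ on $[n]$ with average degree $d$, \[ c\,\frac{n^2\ln d}{d}\ \le\ \mathrm{ex}_{\mathbb{P}}(n,K_3)\ \le\ C\,\frac{n^2\ln d}{d}. \]
   Context: For a triangle-free graph $\mathbb{P}$ on $[n]$, $\mathrm{ex}_{\mathbb{P}}(n,K_3)$ denotes the maximum number of edges of a triangle-free graph $G$ on $[n]$ with $\mathbb{P}\subseteq G$ (as edge sets). For $\beta_1,\beta_2>0$, a graph $\mathbb{P}$ on $[n]$ with average degree $d(\mathbb{P})=2e(\mathbb{P})/n>1$ is $(\beta_1,\beta_2)$-constrained if $\alpha(\mathbb{P})\le \beta_1 n\ln d(\mathbb{P})/d(\mathbb{P})$ and $e(\mathbb{P})\Delta(\mathbb{P})\le (1/4-\beta_2)n^2$, where $\alpha$ is the independence number, $e$ the number of edges, and $\Delta$ the maximum degree. *)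

theory Defs
  imports Complex_Main
begin

definition graph_on :: "nat \<Rightarrow> nat set set \<Rightarrow> bool" where
  "graph_on n G \<longleftrightarrow> (\<forall>e\<in>G. e \<subseteq> {1..n} \<and> card e = 2)"

definition triangle_free :: "nat set set \<Rightarrow> bool" where
  "triangle_free G \<longleftrightarrow> \<not> (\<exists>a b c. {a, b} \<in> G \<and> {b, c} \<in> G \<and> {a, c} \<in> G)"

definition degree :: "nat set set \<Rightarrow> nat \<Rightarrow> nat" where
  "degree G v = card {u. {u, v} \<in> G}"

definition max_degree :: "nat \<Rightarrow> nat set set \<Rightarrow> nat" where
  "max_degree n G = Max (insert 0 (degree G ` {1..n}))"

definition independent_set :: "nat set set \<Rightarrow> nat set \<Rightarrow> bool" where
  "independent_set G S \<longleftrightarrow> (\<forall>u\<in>S. \<forall>v\<in>S. {u, v} \<notin> G)"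

definition indep_number :: "nat \<Rightarrow> nat set set \<Rightarrow> nat" where
  "indep_number n G = Max {card S | S. S \<subseteq> {1..n} \<and> independent_set G S}"

definition avg_degree :: "nat \<Rightarrow> nat set set \<Rightarrow> real" where
  "avg_degree n G = 2 * real (card G) / real n"

definition ex_P_K3 :: "nat \<Rightarrow> nat set set \<Rightarrow> nat" where
  "ex_P_K3 n P = Max {card G | G. graph_on n G \<and> triangle_free G \<and> P \<subseteq> G}"

definition constrained :: "real \<Rightarrow> real \<Rightarrow> nat \<Rightarrow> nat set set \<Rightarrow> bool" where
  "constrained \<beta>1 \<beta>2 n P \<longleftrightarrow>
     avg_degree n P > 1 \<and>
     real (indep_number n P) \<le> \<beta>1 * real n * ln (avg_degree n P) / avg_degree n P \<and>
     real (card P) * real (max_degree n P) \<le> (1/4 - \<beta>2) * (real n)^2"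

end

theory Submission
  imports Defs "HOL-Analysis.Harmonic_Numbers"
begin



definition nb :: "'a set \<Rightarrow> ('a \<Rightarrow> 'a \<Rightarrow> bool) \<Rightarrow> 'a \<Rightarrow> 'a set" where
  "nb V E v = {u\<in>V. E v u}"

definition dg :: "'a set \<Rightarrow> ('a \<Rightarrow> 'a \<Rightarrow> bool) \<Rightarrow> 'a \<Rightarrow> nat" where
  "dg V E v = card (nb V E v)"

lemma shearer:
  fixes V :: "'a set" and E :: "'a \<Rightarrow> 'a \<Rightarrow> bool" and f :: "nat \<Rightarrow> real"
  assumes fin: "finite V"
    and sym: "\<And>x y. E x y \<Longrightarrow> E y x"
    and irr: "\<And>x. \<not> E x x"
    and tf: "\<And>x y z. E x y \<Longrightarrow> E y z \<Longrightarrow> \<not> E x z"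
    and fR: "\<And>d. (real d + 1) * f d \<le> 1 + ((real d)^2 - real d) * (f (d-1) - f d)"
    and fconv: "\<And>d k. k \<le> d \<Longrightarrow> f d + real k * (f (d-1) - f d) \<le> f (d-k)"
    and hmono: "\<And>a b. 1 \<le> a \<Longrightarrow> a \<le> b \<Longrightarrow> f (b-1) - f b \<le> f (a-1) - f a"
  shows "\<exists>S\<subseteq>V. (\<forall>x\<in>S. \<forall>y\<in>S. \<not> E x y) \<and> (\<Sum>v\<in>V. f (dg V E v)) \<le> real (card S)"
  using fin
proof (induction "card V" arbitrary: V rule: less_induct)
  case less
  show ?case
  proof (cases "V = {}")
    case True then show ?thesis by auto
  next
    case False
    define h where "h x = f (x-1) - f x" for x
    define N where "N v = {u\<in>V. E v u}" for v
    define d where "d v = card (N v)" for v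
    define V' where "V' v = V - insert v (N v)" for v
    define k where "k v w = card {u\<in>V. E v u \<and> E u w}" for v w
    define Q where "Q v = 1 + (\<Sum>w\<in>V' v. f (dg (V' v) E w)) - (\<Sum>w\<in>V. f (d w))" for v
    define T where "T v = 1 - f (d v) - (\<Sum>u\<in>V. if E v u then f (d u) else 0)
        + (\<Sum>w\<in>V. real (k v w) * h (d w)) - real (d v) * h (d v)" for v
    have finN: "finite (N v)" for v using less.prems unfolding N_def by auto
    have dgV: "dg V E v = d v" for v unfolding dg_def nb_def d_def N_def by simp
    have QT: "T v \<le> Q v" if vV: "v \<in> V" for v
    proof -
      have dg': "dg (V' v) E w = d w - k v w" and kle: "k v w \<le> d w" if "w \<in> V' v" for w
      proof -
        have "\<not> E w v" using that sym unfolding V'_def N_def by auto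
        then have e1: "nb (V' v) E w = N w - N v"
          unfolding nb_def V'_def N_def by auto
        have e2: "N w \<inter> N v = {u\<in>V. E v u \<and> E u w}" unfolding N_def using sym by blast
        show "dg (V' v) E w = d w - k v w"
          unfolding dg_def e1 d_def k_def using card_Diff_subset_Int[of "N w" "N v"] finN e2 less.prems by simp
        show "k v w \<le> d w" unfolding k_def d_def using finN e2[symmetric] by (simp add: card_mono)
      qed
      have s1: "(\<Sum>w\<in>V' v. f (d w) + real (k v w) * h (d w)) \<le> (\<Sum>w\<in>V' v. f (dg (V' v) E w))"
        apply (rule sum_mono) using dg' kle fconv unfolding h_def by metis
      have split: "(\<Sum>w\<in>V. g w) = (\<Sum>w\<in>V' v. g w) + g v + (\<Sum>w\<in>N v. g w)" for g :: "'a \<Rightarrow> real"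
      proof -
        have "V = V' v \<union> ({v} \<union> N v)" using vV unfolding V'_def N_def by auto
        moreover have "V' v \<inter> ({v} \<union> N v) = {}" unfolding V'_def by auto
        moreover have "v \<notin> N v" using irr unfolding N_def by auto
        ultimately show ?thesis using less.prems finN
          by (metis (no_types, lifting) add.assoc finite_Un sum.insert sum.union_disjoint insert_is_Un)
      qed
      have kvv: "k v v = d v" unfolding k_def d_def N_def using sym by metis
      have kN: "k v w = 0" if "w \<in> N v" for w
      proof -
        have "{u\<in>V. E v u \<and> E u w} = {}" using that tf unfolding N_def by blast
        then show ?thesis unfolding k_def by (metis card.empty)
      qed
      have sN: "(\<Sum>w\<in>N v. f (d w)) = (\<Sum>u\<in>V. if E v u then f (d u) else 0)"
        unfolding N_def using sum.inter_filter[OF less.prems, of "\<lambda>u. f (d u)" "E v"] by simp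
      have "(\<Sum>w\<in>V. real (k v w) * h (d w)) = (\<Sum>w\<in>V' v. real (k v w) * h (d w)) + real (d v) * h (d v)"
        using split[of "\<lambda>w. real (k v w) * h (d w)"] kvv kN by simp
      moreover have "(\<Sum>w\<in>V. f (d w)) = (\<Sum>w\<in>V' v. f (d w)) + f (d v) + (\<Sum>u\<in>V. if E v u then f (d u) else 0)"
        using split[of "\<lambda>w. f (d w)"] sN by simp
      ultimately show ?thesis using s1 unfolding Q_def T_def by (simp add: sum.distrib)
    qed
    have sumT: "0 \<le> (\<Sum>v\<in>V. T v)"
    proof -
      have fV: "finite V" by (rule less.prems)
      have da: "real (d u) = (\<Sum>v\<in>V. if E v u then 1 else 0)" for u
      proof -
        have "N u = {v\<in>V. E v u}" unfolding N_def using sym by blast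
        then show ?thesis unfolding d_def using sum.inter_filter[OF fV, of "\<lambda>_. 1::real" "\<lambda>v. E v u"] by simp
      qed
      have db: "real (d u) = (\<Sum>v\<in>V. if E u v then 1 else 0)" for u
        unfolding d_def N_def using sum.inter_filter[OF fV, of "\<lambda>_. 1::real" "\<lambda>v. E u v"] by simp
      have kc: "real (k v w) = (\<Sum>u\<in>V. if E v u \<and> E u w then 1 else 0)" for v w
        unfolding k_def using sum.inter_filter[OF fV, of "\<lambda>_. 1::real" "\<lambda>u. E v u \<and> E u w"] by simp
      have b: "(\<Sum>v\<in>V. \<Sum>u\<in>V. if E v u then f (d u) else 0) = (\<Sum>u\<in>V. real (d u) * f (d u))"
      proof -
        have "(\<Sum>v\<in>V. \<Sum>u\<in>V. if E v u then f (d u) else 0) = (\<Sum>u\<in>V. \<Sum>v\<in>V. if E v u then f (d u) else 0)"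
          by (rule sum.swap)
        also have "\<dots> = (\<Sum>u\<in>V. (\<Sum>v\<in>V. if E v u then 1 else 0) * f (d u))"
          by (auto simp: sum_distrib_right intro!: sum.cong)
        finally show ?thesis using da by simp
      qed
      have c: "(\<Sum>v\<in>V. \<Sum>w\<in>V. real (k v w) * h (d w)) = (\<Sum>w\<in>V. \<Sum>u\<in>V. if E w u then h (d w) * real (d u) else 0)"
      proof -
        have "(\<Sum>v\<in>V. \<Sum>w\<in>V. real (k v w) * h (d w)) = (\<Sum>v\<in>V. \<Sum>w\<in>V. \<Sum>u\<in>V. if E v u \<and> E u w then h (d w) else 0)"
          unfolding kc by (auto simp: sum_distrib_right intro!: sum.cong)
        also have "\<dots> = (\<Sum>w\<in>V. \<Sum>v\<in>V. \<Sum>u\<in>V. if E v u \<and> E u w then h (d w) else 0)"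
          by (rule sum.swap)
        also have "\<dots> = (\<Sum>w\<in>V. \<Sum>u\<in>V. \<Sum>v\<in>V. if E v u \<and> E u w then h (d w) else 0)"
          by (rule sum.cong[OF refl], rule sum.swap)
        also have "\<dots> = (\<Sum>w\<in>V. \<Sum>u\<in>V. if E w u then h (d w) * (\<Sum>v\<in>V. if E v u then 1 else 0) else 0)"
        proof (rule sum.cong[OF refl], rule sum.cong[OF refl])
          fix w u
          show "(\<Sum>v\<in>V. if E v u \<and> E u w then h (d w) else 0) = (if E w u then h (d w) * (\<Sum>v\<in>V. if E v u then 1 else 0) else 0)"
          proof (cases "E w u")
            case True
            then have "E u w" using sym by blast
            then show ?thesis using True by (auto simp add: sum_distrib_left intro!: sum.cong)
          next
            case False
            then have "\<not> E u w" using sym by blast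
            then show ?thesis using False by simp
          qed
        qed
        finally show ?thesis by (simp only: da[symmetric])
      qed
      have e: "(\<Sum>v\<in>V. (real (d v))^2 * h (d v)) = (\<Sum>w\<in>V. \<Sum>u\<in>V. if E w u then h (d w) * real (d w) else 0)"
      proof -
        have "(\<Sum>u\<in>V. if E w u then h (d w) * real (d w) else 0) = (real (d w))^2 * h (d w)" for w
        proof -
          have "(\<Sum>u\<in>V. if E w u then h (d w) * real (d w) else 0) = (h (d w) * real (d w)) * (\<Sum>u\<in>V. if E w u then 1 else 0)"
            by (subst sum_distrib_left) (auto intro!: sum.cong)
          also have "\<dots> = (real (d w))^2 * h (d w)" by (simp only: db[symmetric]) (simp add: power2_eq_square)
          finally show ?thesis .
        qed
        then show ?thesis by simp
      qed
      define X where "X = (\<Sum>w\<in>V. \<Sum>u\<in>V. if E w u then h (d w) * (real (d u) - real (d w)) else 0)"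
      have X1: "X = (\<Sum>w\<in>V. \<Sum>u\<in>V. if E w u then h (d w) * real (d u) else 0) - (\<Sum>v\<in>V. (real (d v))^2 * h (d v))"
        unfolding e X_def by (simp add: sum_subtractf[symmetric] right_diff_distrib if_distrib cong: if_cong)
      have X2: "X = (\<Sum>w\<in>V. \<Sum>u\<in>V. if E w u then h (d u) * (real (d w) - real (d u)) else 0)"
      proof -
        have "X = (\<Sum>u\<in>V. \<Sum>w\<in>V. if E w u then h (d w) * (real (d u) - real (d w)) else 0)"
          unfolding X_def by (rule sum.swap)
        also have "\<dots> = (\<Sum>u\<in>V. \<Sum>w\<in>V. if E u w then h (d w) * (real (d u) - real (d w)) else 0)"
        proof (rule sum.cong[OF refl], rule sum.cong[OF refl])
          fix u w
          have "E w u = E u w" using sym by blast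
          then show "(if E w u then h (d w) * (real (d u) - real (d w)) else 0) = (if E u w then h (d w) * (real (d u) - real (d w)) else 0)" by simp
        qed
        finally show ?thesis by simp
      qed
      have Xnn: "0 \<le> X"
      proof -
        have "2 * X = (\<Sum>w\<in>V. \<Sum>u\<in>V. if E w u then (h (d w) - h (d u)) * (real (d u) - real (d w)) else 0)"
        proof -
          have "2 * X = X + X" by simp
          also have "\<dots> = (\<Sum>w\<in>V. \<Sum>u\<in>V. if E w u then h (d w) * (real (d u) - real (d w)) else 0)
             + (\<Sum>w\<in>V. \<Sum>u\<in>V. if E w u then h (d u) * (real (d w) - real (d u)) else 0)"
            using X2 unfolding X_def by simp
          also have "\<dots> = (\<Sum>w\<in>V. \<Sum>u\<in>V. (if E w u then h (d w) * (real (d u) - real (d w)) else 0)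
             + (if E w u then h (d u) * (real (d w) - real (d u)) else 0))"
            by (simp only: sum.distrib[symmetric])
          also have "\<dots> = (\<Sum>w\<in>V. \<Sum>u\<in>V. if E w u then (h (d w) - h (d u)) * (real (d u) - real (d w)) else 0)"
            by (rule sum.cong[OF refl], rule sum.cong[OF refl]) (simp add: algebra_simps)
          finally show ?thesis .
        qed
        also have "\<dots> \<ge> 0"
        proof (intro sum_nonneg)
          fix w u assume "w \<in> V" "u \<in> V"
          show "0 \<le> (if E w u then (h (d w) - h (d u)) * (real (d u) - real (d w)) else 0)"
          proof (cases "E w u")
            case True
            then have "u \<in> N w" "w \<in> N u" using \<open>u\<in>V\<close> \<open>w\<in>V\<close> sym unfolding N_def by auto
            then have "1 \<le> d w" "1 \<le> d u" unfolding d_def using finN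
              by (metis One_nat_def Suc_leI card_gt_0_iff empty_iff)+
            then show ?thesis using True hmono[of "d w" "d u"] hmono[of "d u" "d w"] unfolding h_def
              by (cases "d w \<le> d u") (auto intro: mult_nonneg_nonneg mult_nonpos_nonpos)
          qed simp
        qed
        finally show ?thesis by simp
      qed
      have R: "0 \<le> (\<Sum>v\<in>V. 1 - (real (d v) + 1) * f (d v) + ((real (d v))^2 - real (d v)) * h (d v))"
        using fR unfolding h_def by (intro sum_nonneg) (smt (verit))
      have "(\<Sum>v\<in>V. T v) = (\<Sum>v\<in>V. 1 - f (d v) - real (d v) * h (d v))
          - (\<Sum>v\<in>V. \<Sum>u\<in>V. if E v u then f (d u) else 0) + (\<Sum>v\<in>V. \<Sum>w\<in>V. real (k v w) * h (d w))"
        unfolding T_def by (simp add: sum.distrib sum_subtractf)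
      also have "\<dots> = (\<Sum>v\<in>V. 1 - (real (d v) + 1) * f (d v) + ((real (d v))^2 - real (d v)) * h (d v)) + X"
        unfolding b c X1 by (simp add: sum.distrib sum_subtractf algebra_simps)
      finally show ?thesis using R Xnn by simp
    qed
    have "\<exists>v\<in>V. 0 \<le> Q v"
    proof (rule ccontr)
      assume "\<not> ?thesis"
      then have "\<forall>v\<in>V. T v < 0" using QT by force
      then have "(\<Sum>v\<in>V. T v) < 0" using sum_strict_mono[of V T "\<lambda>_. 0"] False less.prems by simp
      then show False using sumT by simp
    qed
    then obtain v where vV: "v \<in> V" and Qv: "0 \<le> Q v" by blast
    have c1: "card (V' v) < card V" unfolding V'_def using vV less.prems
      by (intro psubset_card_mono) auto
    have c2: "finite (V' v)" using less.prems unfolding V'_def by (rule finite_Diff)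
    obtain S' where S': "S' \<subseteq> V' v" "\<forall>x\<in>S'. \<forall>y\<in>S'. \<not> E x y"
      "(\<Sum>w\<in>V' v. f (dg (V' v) E w)) \<le> real (card S')" using less.hyps[OF c1 c2] by blast
    define S where "S = insert v S'"
    have vS': "v \<notin> S'" using S'(1) unfolding V'_def by auto
    have "S \<subseteq> V" using S'(1) vV unfolding S_def V'_def by auto
    moreover have "\<forall>x\<in>S. \<forall>y\<in>S. \<not> E x y"
      using S' irr sym unfolding S_def V'_def N_def by blast
    moreover have "real (card S) = real (card S') + 1"
      unfolding S_def using vS' S'(1) less.prems finite_subset[of S' "V' v"] c2 by simp
    moreover have "(\<Sum>v\<in>V. f (dg V E v)) = (\<Sum>w\<in>V. f (d w))" using dgV by simp
    ultimately show ?thesis using Qv S'(3) unfolding Q_def by (intro exI[of _ S]) auto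
  qed
qed



definition shf :: "nat \<Rightarrow> real" where
  "shf d = (if d = 0 then 1 else harm d / (2 * real d))"

lemma harm_le_n: "(harm n :: real) \<le> real n"
proof (induction n)
  case 0 then show ?case by (simp add: harm_def)
next
  case (Suc n)
  have "inverse (real (Suc n)) \<le> 1" by (simp add: inverse_le_1_iff)
  then show ?case using Suc by (simp add: harm_Suc)
qed

lemma harm_ge2: "2 \<le> n \<Longrightarrow> (3/2::real) \<le> harm n"
proof -
  assume "2 \<le> n"
  then have "(harm 2::real) \<le> harm n" by (rule harm_mono)
  moreover have "(harm 2::real) = 3/2" by (simp add: harm_def numeral_2_eq_2)
  ultimately show ?thesis by simp
qed

lemma harm_pred: "1 \<le> d \<Longrightarrow> (harm d :: real) = harm (d-1) + 1 / real d"
  using harm_Suc[of "d-1", where 'a=real] by (simp add: inverse_eq_divide)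

lemma shf_h: "2 \<le> d \<Longrightarrow> shf (d-1) - shf d = (harm d - 1) / (2 * real d * (real d - 1))"
proof -
  assume d: "2 \<le> d"
  have hp: "(harm (d-1)::real) = harm d - 1 / real d" using harm_pred[of d] d by simp
  have r: "real (d-1) = real d - 1" using d by simp
  have "shf (d-1) - shf d = harm (d-1) / (2 * (real d - 1)) - harm d / (2 * real d)"
    unfolding shf_def using d r by simp
  also have "\<dots> = (harm d - 1) / (2 * real d * (real d - 1))"
    unfolding hp using d by (simp add: field_simps)
  finally show ?thesis .
qed

lemma shf_h1: "shf 0 - shf 1 = 1/2"
  by (simp add: shf_def harm_def)

lemma shf_R: "(real d + 1) * shf d \<le> 1 + ((real d)^2 - real d) * (shf (d-1) - shf d)"
proof (cases "d \<le> 1")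
  case True
  then consider "d = 0" | "d = 1" by linarith
  then show ?thesis by cases (simp_all add: shf_def harm_def)
next
  case False
  then have d: "2 \<le> d" by simp
  have "((real d)^2 - real d) * (shf (d-1) - shf d) = (harm d - 1) / 2"
    unfolding shf_h[OF d] using d by (simp add: field_simps power2_eq_square)
  moreover have "(real d + 1) * shf d = (real d + 1) * harm d / (2 * real d)"
    unfolding shf_def using d by simp
  moreover have "(real d + 1) * harm d / (2 * real d) \<le> 1 + (harm d - 1) / 2"
  proof -
    have "harm d \<le> real d" by (rule harm_le_n)
    moreover have "(1 + (harm d - 1) / 2) * (2 * real d) = real d + harm d * real d"
      by (simp add: field_simps)
    ultimately have "(real d + 1) * harm d \<le> (1 + (harm d - 1) / 2) * (2 * real d)"
      by (simp add: algebra_simps)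
    then show ?thesis using d by (simp add: pos_divide_le_eq)
  qed
  ultimately show ?thesis by linarith
qed

lemma shf_hstep: "1 \<le> d \<Longrightarrow> shf (Suc d - 1) - shf (Suc d) \<le> shf (d-1) - shf d"
proof -
  assume d1: "1 \<le> d"
  show ?thesis
  proof (cases "d = 1")
    case True
    have "shf 1 - shf 2 = (harm 2 - 1) / (2 * 2 * (2 - 1))" using shf_h[of 2] by simp
    also have "\<dots> = 1/8" by (simp add: harm_def numeral_2_eq_2)
    finally have "shf 1 - shf 2 = 1/8" .
    then have "shf (Suc 0) - shf (Suc (Suc 0)) = 1/8" by (simp add: numeral_2_eq_2)
    then show ?thesis using True shf_h1 by simp
  next
    case False
    then have d: "2 \<le> d" using d1 by simp
    have a: "shf (Suc d - 1) - shf (Suc d) = (harm (Suc d) - 1) / (2 * real (Suc d) * (real (Suc d) - 1))"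
      using shf_h[of "Suc d"] d by simp
    have b: "shf (d-1) - shf d = (harm d - 1) / (2 * real d * (real d - 1))" using shf_h[OF d] .
    have hs: "(harm (Suc d)::real) = harm d + 1 / (real d + 1)" by (simp add: harm_Suc inverse_eq_divide)
    have H: "(3/2::real) \<le> harm d" using harm_ge2[OF d] .
    have dd: "(2::real) \<le> real d" using d by simp
    have key: "(real d - 1) * ((harm d::real) + 1 / (real d + 1) - 1) \<le> (real d + 1) * (harm d - 1)"
    proof -
      have "(real d - 1) / (real d + 1) \<le> 1" using dd by simp
      moreover have "(real d - 1) * (1 / (real d + 1)) = (real d - 1) / (real d + 1)" by simp
      ultimately have q1: "(real d - 1) * (1 / (real d + 1)) \<le> 1" by (simp only:)
      have q2: "1 \<le> 2 * (harm d - (1::real))" using H by simp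
      have "(real d - 1) * (1 / (real d + 1)) \<le> 2 * (harm d - 1)" using order_trans[OF q1 q2] .
      then show ?thesis by (simp add: algebra_simps)
    qed
    have "(harm d + 1 / (real d + 1) - 1) / (2 * (real d + 1) * real d) \<le> (harm d - 1) / (2 * real d * (real d - 1))"
      using key dd by (simp add: divide_simps) (simp add: algebra_simps)
    then show ?thesis unfolding a b hs by (simp add: algebra_simps)
  qed
qed

lemma shf_hmono: "1 \<le> a \<Longrightarrow> a \<le> b \<Longrightarrow> shf (b-1) - shf b \<le> shf (a-1) - shf a"
proof -
  assume a: "1 \<le> a" and ab: "a \<le> b"
  show ?thesis using ab
  proof (induction b rule: dec_induct)
    case base then show ?case by simp
  next
    case (step n) then show ?case using shf_hstep[of n] a by simp
  qed
qed

lemma shf_hnn: "1 \<le> d \<Longrightarrow> 0 \<le> shf (d-1) - shf d"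
proof (cases "d = 1")
  case True then show ?thesis using shf_h1 by simp
next
  case False
  assume "1 \<le> d"
  then have d: "2 \<le> d" using False by simp
  then show ?thesis unfolding shf_h[OF d] using harm_ge2[OF d] by (simp add: divide_nonneg_pos)
qed

lemma shf_conv: "k \<le> d \<Longrightarrow> shf d + real k * (shf (d-1) - shf d) \<le> shf (d-k)"
proof (induction k)
  case 0 then show ?case by simp
next
  case (Suc k)
  then have "shf d + real k * (shf (d-1) - shf d) \<le> shf (d-k)" by simp
  moreover have "shf (d-1) - shf d \<le> shf (d-k-1) - shf (d-k)"
    using shf_hmono[of "d-k" d] Suc.prems by simp
  ultimately show ?case by (simp add: algebra_simps)
qed

lemma shf_anti: "x \<le> m \<Longrightarrow> shf m \<le> shf x"
proof (cases "m = 0")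
  case True then show "x \<le> m \<Longrightarrow> ?thesis" by simp
next
  case False
  assume xm: "x \<le> m"
  have "shf m + real (m - x) * (shf (m-1) - shf m) \<le> shf (m - (m-x))" by (rule shf_conv) simp
  moreover have "0 \<le> real (m - x) * (shf (m-1) - shf m)" using shf_hnn[of m] False by simp
  ultimately show ?thesis using xm by simp
qed

lemma shf_nonneg: "0 \<le> shf d"
  unfolding shf_def by (simp add: harm_nonneg)

lemma shf_ln: "1 \<le> m \<Longrightarrow> ln (real m) / (2 * real m) \<le> shf m"
proof -
  assume m: "1 \<le> m"
  have "ln (real m) \<le> ln (real m + 1)" using m by simp
  also have "\<dots> \<le> harm m" by (rule ln_le_harm)
  finally show ?thesis unfolding shf_def using m by (simp add: divide_right_mono)
qed




lemma graph_fin: "graph_on n G \<Longrightarrow> G \<subseteq> Pow {1..n}"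
  unfolding graph_on_def by auto

lemma graph_finite: "graph_on n G \<Longrightarrow> finite G"
  by (rule finite_subset[OF graph_fin]) simp_all

lemma edge_ne: "graph_on n G \<Longrightarrow> {a,b} \<in> G \<Longrightarrow> a \<noteq> b"
proof
  assume "graph_on n G" "{a,b} \<in> G" "a = b"
  then have "card {a,b} = 2" unfolding graph_on_def by blast
  then show False using \<open>a = b\<close> by simp
qed

lemma edge_in: "graph_on n G \<Longrightarrow> {a,b} \<in> G \<Longrightarrow> a \<in> {1..n} \<and> b \<in> {1..n}"
  unfolding graph_on_def by (meson insert_subset)

lemma nbr_sub: "graph_on n G \<Longrightarrow> {u. {u,v} \<in> G} \<subseteq> {1..n}"
proof
  fix u assume "graph_on n G" "u \<in> {u. {u,v} \<in> G}"
  then show "u \<in> {1..n}" using edge_in[of n G u v] by simp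
qed

lemma nbr_fin: "graph_on n G \<Longrightarrow> finite {u. {u,v} \<in> G}"
  by (rule finite_subset[OF nbr_sub]) simp_all


lemma handshake:
  assumes g: "graph_on n G"
  shows "(\<Sum>v\<in>{1..n}. degree G v) = 2 * card G"
proof -
  define T where "T = (SIGMA v:{1..n}. {u. {u,v} \<in> G})"
  define pr where "pr e = {(v,u). {u,v} = e}" for e :: "nat set"
  have 1: "card T = (\<Sum>v\<in>{1..n}. degree G v)"
    unfolding T_def degree_def by (rule card_SigmaI) (simp_all add: nbr_fin[OF g])
  have 2: "T = (\<Union>e\<in>G. pr e)"
  proof (rule set_eqI)
    fix p :: "nat \<times> nat"
    obtain v u where p: "p = (v,u)" by (cases p)
    show "p \<in> T \<longleftrightarrow> p \<in> (\<Union>e\<in>G. pr e)"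
    proof
      assume "p \<in> T" then have "{u,v} \<in> G" unfolding p T_def by simp
      then show "p \<in> (\<Union>e\<in>G. pr e)" unfolding p pr_def by blast
    next
      assume "p \<in> (\<Union>e\<in>G. pr e)" then have "{u,v} \<in> G" unfolding p pr_def by blast
      then show "p \<in> T" unfolding p T_def using edge_in[OF g, of u v] by simp
    qed
  qed
  have fpr: "finite (pr e)" if "e \<in> G" for e
  proof -
    have "pr e \<subseteq> {1..n} \<times> {1..n}" 
    proof
      fix p assume "p \<in> pr e"
      then obtain v u where "p = (v,u)" "{u,v} = e" unfolding pr_def by blast
      then show "p \<in> {1..n} \<times> {1..n}" using edge_in[OF g, of u v] that by simp
    qed
    then show "finite (pr e)" by (rule finite_subset) simp
  qed
  have 3: "card (\<Union>e\<in>G. pr e) = (\<Sum>e\<in>G. card (pr e))"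
  proof (rule card_UN_disjoint)
    show "finite G" using graph_finite[OF g] .
    show "\<forall>e\<in>G. finite (pr e)" using fpr by blast
    show "\<forall>e\<in>G. \<forall>e'\<in>G. e \<noteq> e' \<longrightarrow> pr e \<inter> pr e' = {}" unfolding pr_def by blast
  qed
  have 4: "card (pr e) = 2" if "e \<in> G" for e
  proof -
    have "card e = 2" using g that unfolding graph_on_def by blast
    then obtain x y where e: "e = {x,y}" "x \<noteq> y" unfolding card_2_iff by blast
    have "pr e = {(y,x),(x,y)}"
    proof (rule set_eqI)
      fix p :: "nat \<times> nat"
      obtain v u where p: "p = (v,u)" by (cases p)
      show "p \<in> pr e \<longleftrightarrow> p \<in> {(y,x),(x,y)}" unfolding p pr_def e by (auto simp: doubleton_eq_iff)
    qed
    then show ?thesis using e by simp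
  qed
  show ?thesis using 1 2 3 4 by simp
qed

lemma ex_set_finite: "finite {card G | G. graph_on n G \<and> triangle_free G \<and> P \<subseteq> G}"
proof -
  have "{card G | G. graph_on n G \<and> triangle_free G \<and> P \<subseteq> G} \<subseteq> {..card (Pow {1..n})}"
  proof
    fix x assume "x \<in> {card G | G. graph_on n G \<and> triangle_free G \<and> P \<subseteq> G}"
    then obtain G where "x = card G" "graph_on n G" by blast
    then show "x \<in> {..card (Pow {1..n})}" using graph_fin[of n G] card_mono[of "Pow {1..n}" G] by simp
  qed
  then show ?thesis using finite_subset by blast
qed

lemma ex_ge:
  assumes "graph_on n G" "triangle_free G" "P \<subseteq> G"
  shows "card G \<le> ex_P_K3 n P"
  unfolding ex_P_K3_def using assms by (intro Max_ge[OF ex_set_finite]) auto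

lemma indep_finite: "finite {card S | S. S \<subseteq> {1..n} \<and> independent_set G S}"
proof -
  have "{card S | S. S \<subseteq> {1..n} \<and> independent_set G S} \<subseteq> {..n}"
  proof
    fix x assume "x \<in> {card S | S. S \<subseteq> {1..n} \<and> independent_set G S}"
    then obtain S where "x = card S" "S \<subseteq> {1..n}" by blast
    then show "x \<in> {..n}" using card_mono[of "{1..n}" S] by simp
  qed
  then show ?thesis using finite_subset by blast
qed

lemma upper:
  assumes g: "graph_on n P" and tf: "triangle_free P"
  shows "2 * ex_P_K3 n P \<le> n * indep_number n P"
proof -
  have "ex_P_K3 n P \<in> {card G | G. graph_on n G \<and> triangle_free G \<and> P \<subseteq> G}"
    unfolding ex_P_K3_def using g tf by (intro Max_in[OF ex_set_finite]) auto
  then obtain G where G: "graph_on n G" "triangle_free G" "P \<subseteq> G" "ex_P_K3 n P = card G" by blast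
  have "degree G v \<le> indep_number n P" for v
  proof -
    have "independent_set P {u. {u,v} \<in> G}"
      unfolding independent_set_def
    proof (intro ballI)
      fix x y assume "x \<in> {u. {u,v} \<in> G}" "y \<in> {u. {u,v} \<in> G}"
      then have xy: "{x,v} \<in> G" "{y,v} \<in> G" by auto
      show "{x,y} \<notin> P"
      proof
        assume "{x,y} \<in> P"
        then have "{x,y} \<in> G" using G(3) by blast
        then show False using xy G(2) unfolding triangle_free_def by blast
      qed
    qed
    then have "card {u. {u,v} \<in> G} \<in> {card S | S. S \<subseteq> {1..n} \<and> independent_set P S}"
      using nbr_sub[OF G(1), of v] by (intro CollectI exI[of _ "{u. {u,v} \<in> G}"]) simp
    then show ?thesis unfolding degree_def indep_number_def by (rule Max_ge[OF indep_finite])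
  qed
  then have "(\<Sum>v\<in>{1..n}. degree G v) \<le> (\<Sum>v\<in>{1..n}. indep_number n P)" by (intro sum_mono)
  moreover have "(\<Sum>v\<in>{1..n}. indep_number n P) = n * indep_number n P" by simp
  ultimately show ?thesis using handshake[OF G(1)] G(4) by linarith
qed



lemma lower_construct:
  assumes g: "graph_on n P" and tf: "triangle_free P"
    and AB: "A \<subseteq> {1..n}" "B \<subseteq> {1..n}" "A \<inter> B = {}"
    and E0_def: "E0 = {x \<in> A \<times> B. \<not> (\<exists>c. {fst x, c} \<in> P \<and> {snd x, c} \<in> P)}"
    and CE_def: "CE = (\<lambda>x y. (fst x = fst y \<and> {snd x, snd y} \<in> P) \<or> (snd x = snd y \<and> {fst x, fst y} \<in> P))"
  shows "(\<Sum>x\<in>E0. shf (dg E0 CE x)) \<le> real (ex_P_K3 n P)"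
proof -
  have tfP: "False" if "{a,b} \<in> P" "{b,c} \<in> P" "{a,c} \<in> P" for a b c
  proof -
    have "\<exists>a b c. {a,b} \<in> P \<and> {b,c} \<in> P \<and> {a,c} \<in> P" using that by (intro exI[of _ a] exI[of _ b] exI[of _ c]) simp
    then show False using tf unfolding triangle_free_def by (rule notE[rotated])
  qed
  have ne: "a \<noteq> b" if "{a,b} \<in> P" for a b using edge_ne[OF g that] .
  have finE0: "finite E0"
  proof (rule finite_subset)
    show "E0 \<subseteq> {1..n} \<times> {1..n}" unfolding E0_def using AB by auto
  qed simp
  have sym: "CE x y \<Longrightarrow> CE y x" for x y unfolding CE_def by (auto simp: insert_commute)
  have irr: "\<not> CE x x" for x unfolding CE_def using ne by blast
  have tfC: "\<not> CE x z" if "CE x y" "CE y z" for x y z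
  proof
    assume xz: "CE x z"
    obtain a1 b1 where x: "x = (a1,b1)" by (cases x)
    obtain a2 b2 where y: "y = (a2,b2)" by (cases y)
    obtain a3 b3 where z: "z = (a3,b3)" by (cases z)
    show False using that xz unfolding x y z CE_def by (auto dest: tfP ne)
  qed
  obtain S where S: "S \<subseteq> E0" "\<forall>x\<in>S. \<forall>y\<in>S. \<not> CE x y" "(\<Sum>v\<in>E0. shf (dg E0 CE v)) \<le> real (card S)"
  proof -
    have "\<exists>S\<subseteq>E0. (\<forall>x\<in>S. \<forall>y\<in>S. \<not> CE x y) \<and> (\<Sum>v\<in>E0. shf (dg E0 CE v)) \<le> real (card S)"
      by (rule shearer[OF finE0, of CE shf]) (fact sym irr tfC shf_R shf_conv shf_hmono)+
    then show ?thesis using that by blast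
  qed
  define H where "H = (\<lambda>(a,b). {a,b::nat}) ` S"
  define G where "G = P \<union> H"
  have SAB: "a \<in> A" "b \<in> B" if "(a,b) \<in> S" for a b using that S(1) unfolding E0_def by auto
  have K1: False if "(a,b) \<in> S" "{a,c} \<in> P" "{b,c} \<in> P" for a b c
    using that S(1) unfolding E0_def by auto
  have K2: False if "(a,b) \<in> S" "(a,b') \<in> S" "{b,b'} \<in> P" for a b b'
  proof -
    have "CE (a,b) (a,b')" unfolding CE_def using that(3) by simp
    then show False using S(2) that(1,2) by blast
  qed
  have K3: False if "(a,b) \<in> S" "(a',b) \<in> S" "{a,a'} \<in> P" for a b a'
  proof -
    have "CE (a,b) (a',b)" unfolding CE_def using that(3) by simp
    then show False using S(2) that(1,2) by blast
  qed
  have Gcase: "{x,y} \<in> P \<or> (x,y) \<in> S \<or> (y,x) \<in> S" if "{x,y} \<in> G" for x y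
    using that unfolding G_def H_def by (auto simp: doubleton_eq_iff)
  have gG: "graph_on n G"
    unfolding graph_on_def
  proof
    fix e assume "e \<in> G"
    then show "e \<subseteq> {1..n} \<and> card e = 2"
    proof (cases "e \<in> P")
      case True then show ?thesis using g unfolding graph_on_def by blast
    next
      case False
      then obtain a b where "(a,b) \<in> S" "e = {a,b}" using \<open>e \<in> G\<close> unfolding G_def H_def by auto
      moreover have "a \<noteq> b" using SAB[OF \<open>(a,b) \<in> S\<close>] AB(3) by auto
      ultimately show ?thesis using SAB[OF \<open>(a,b) \<in> S\<close>] AB(1,2) by auto
    qed
  qed
  have Psym: "{b,a} \<in> P" if "{a,b} \<in> P" for a b using that by (simp add: insert_commute)
  have tfG: "triangle_free G"
    unfolding triangle_free_def
  proof
    assume "\<exists>x y z. {x, y} \<in> G \<and> {y, z} \<in> G \<and> {x, z} \<in> G"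
    then obtain x y z where e: "{x, y} \<in> G" "{y, z} \<in> G" "{x, z} \<in> G" by blast
    have D: "False" if "a \<in> A" "a \<in> B" for a using that AB(3) by blast
    from Gcase[OF e(1)] Gcase[OF e(2)] Gcase[OF e(3)] show False
      using Psym by (elim disjE) (blast dest: K1 K2 K3 SAB D tfP)+
  qed
  have PG: "P \<subseteq> G" unfolding G_def by simp
  have "inj_on (\<lambda>(a,b). {a,b::nat}) S"
  proof (rule inj_onI)
    fix p q assume pq: "p \<in> S" "q \<in> S" "(\<lambda>(a,b). {a,b::nat}) p = (\<lambda>(a,b). {a,b}) q"
    obtain a b where p: "p = (a,b)" by (cases p)
    obtain a' b' where q: "q = (a',b')" by (cases q)
    have "{a,b} = {a',b'}" using pq(3) unfolding p q by simp
    moreover have "a \<in> A" "b \<in> B" "a' \<in> A" "b' \<in> B" using SAB pq(1,2) unfolding p q by auto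
    ultimately show "p = q" unfolding p q using AB(3) by (auto simp: doubleton_eq_iff)
  qed
  then have "card H = card S" unfolding H_def by (rule card_image)
  moreover have "card H \<le> card G" unfolding G_def using graph_finite[OF gG] unfolding G_def
    by (intro card_mono) auto
  moreover have "card G \<le> ex_P_K3 n P" by (rule ex_ge[OF gG tfG PG])
  ultimately show ?thesis using S(3) by linarith
qed



lemma deg_le_max: "v \<in> {1..n} \<Longrightarrow> degree P v \<le> max_degree n P"
  unfolding max_degree_def by (intro Max_ge) auto

lemma lower_bound:
  assumes g: "graph_on n P" and tf: "triangle_free P" and n2: "2 \<le> n"
    and d1: "avg_degree n P > 1"
    and cond: "real (card P) * real (max_degree n P) \<le> (1/4 - \<beta>2) * (real n)^2"
    and b2: "\<beta>2 > 0"
  shows "(real n)^2 * ln (avg_degree n P) / (2048 * avg_degree n P) \<le> real (ex_P_K3 n P)"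
proof -
  define d where "d = avg_degree n P"
  define e where "e = card P"
  define D where "D v = degree P v" for v
  define \<Delta> where "\<Delta> = max_degree n P"
  have hs: "(\<Sum>v\<in>{1..n}. D v) = 2 * e" unfolding D_def e_def by (rule handshake[OF g])
  have nd: "real n * d = 2 * real e" unfolding d_def avg_degree_def e_def using n2 by simp
  have d1': "d > 1" using d1 unfolding d_def .
  define q where "q = n div 2"
  define A where "A = {1..q}"
  define B where "B = {q+1..n}"
  have AB: "A \<subseteq> {1..n}" "B \<subseteq> {1..n}" "A \<inter> B = {}" unfolding A_def B_def q_def by auto
  have AuB: "A \<union> B = {1..n}" unfolding A_def B_def q_def by auto
  define E0 where "E0 = {x \<in> A \<times> B. \<not> (\<exists>c. {fst x, c} \<in> P \<and> {snd x, c} \<in> P)}"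
  define CE where "CE = (\<lambda>x y :: nat \<times> nat. (fst x = fst y \<and> {snd x, snd y} \<in> P) \<or> (snd x = snd y \<and> {fst x, fst y} \<in> P))"
  have main: "(\<Sum>x\<in>E0. shf (dg E0 CE x)) \<le> real (ex_P_K3 n P)"
    by (rule lower_construct[OF g tf AB E0_def CE_def])
  have finAB: "finite (A \<times> B)" unfolding A_def B_def by simp
  have E0AB: "E0 \<subseteq> A \<times> B" unfolding E0_def by auto
  have finE0: "finite E0" using finite_subset[OF E0AB finAB] .
  define NA where "NA c = {a\<in>A. {a,c} \<in> P}" for c
  define NB where "NB c = {b\<in>B. {b,c} \<in> P}" for c
  define Bad where "Bad = A \<times> B - E0"
  have Bad_sub: "Bad \<subseteq> (\<Union>c\<in>{1..n}. NA c \<times> NB c)"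
  proof
    fix x assume "x \<in> Bad"
    then obtain a b c where x: "x = (a,b)" "a \<in> A" "b \<in> B" "{a,c} \<in> P" "{b,c} \<in> P"
      unfolding Bad_def E0_def by auto
    have "c \<in> {1..n}" using edge_in[OF g x(4)] by simp
    then show "x \<in> (\<Union>c\<in>{1..n}. NA c \<times> NB c)" using x unfolding NA_def NB_def by auto
  qed
  have finN: "finite (NA c)" "finite (NB c)" for c unfolding NA_def NB_def A_def B_def by auto
  have NAB: "card (NA c) + card (NB c) \<le> D c" for c
  proof -
    have "card (NA c) + card (NB c) = card (NA c \<union> NB c)"
      using finN AB(3) unfolding NA_def NB_def by (subst card_Un_disjoint) auto
    also have "\<dots> \<le> D c" unfolding D_def degree_def
      by (rule card_mono[OF nbr_fin[OF g]]) (auto simp: NA_def NB_def)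
    finally show ?thesis .
  qed
  have c4: "4 * real (card (NA c)) * real (card (NB c)) \<le> real \<Delta> * real (D c)" if "c \<in> {1..n}" for c
  proof -
    define x where "x = real (card (NA c))"
    define y where "y = real (card (NB c))"
    have "x + y \<le> real (D c)" using NAB[of c] unfolding x_def y_def by linarith
    moreover have "0 \<le> x" "0 \<le> y" unfolding x_def y_def by auto
    ultimately have "(x + y)^2 \<le> (real (D c))^2" by (intro power_mono) auto
    moreover have "4 * x * y \<le> (x+y)^2" using sum_squares_ge_zero[of "x - y" 0]
      by (simp add: power2_eq_square algebra_simps)
    moreover have "real (D c) \<le> real \<Delta>" using deg_le_max[OF that] unfolding D_def \<Delta>_def by simp
    then have "(real (D c))^2 \<le> real \<Delta> * real (D c)" by (simp add: power2_eq_square mult_right_mono)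
    ultimately show ?thesis unfolding x_def y_def by linarith
  qed
  have "card Bad \<le> card (\<Union>c\<in>{1..n}. NA c \<times> NB c)"
    by (rule card_mono[OF _ Bad_sub]) (simp add: finN)
  also have "\<dots> \<le> (\<Sum>c\<in>{1..n}. card (NA c \<times> NB c))" by (rule card_UN_le) simp
  finally have "real (card Bad) \<le> (\<Sum>c\<in>{1..n}. real (card (NA c)) * real (card (NB c)))"
    by (simp add: card_cartesian_product flip: of_nat_mult of_nat_sum)
  then have "4 * real (card Bad) \<le> (\<Sum>c\<in>{1..n}. 4 * real (card (NA c)) * real (card (NB c)))"
    by (simp add: sum_distrib_left[symmetric] mult.assoc)
  also have "\<dots> \<le> (\<Sum>c\<in>{1..n}. real \<Delta> * real (D c))" by (rule sum_mono) (rule c4)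
  also have "\<dots> = real \<Delta> * (2 * real e)" using hs by (simp flip: sum_distrib_left of_nat_sum)
  also have "\<dots> \<le> 2 * ((1/4 - \<beta>2) * (real n)^2)" using cond unfolding e_def \<Delta>_def by (simp add: mult.commute)
  also have "\<dots> \<le> (real n)^2 / 2" using b2 by (simp add: algebra_simps)
  finally have Badb: "4 * real (card Bad) \<le> (real n)^2 / 2" .
  have cAB: "card (A \<times> B) \<le> card E0 + card Bad"
    using card_Un_le[of E0 Bad] card_mono[of "E0 \<union> Bad" "A \<times> B"] finE0 finAB
    unfolding Bad_def by (metis Un_Diff_cancel Un_commute card_mono finite_UnI finite_Diff sup.cobounded1 le_trans)
  have cAB2: "card (A \<times> B) = q * (n - q)" unfolding A_def B_def by (simp add: card_cartesian_product)
  have qq: "(real n)^2 - 1 \<le> 4 * (real q * real (n - q))"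
  proof -
    have "n = 2 * q \<or> n = 2 * q + 1" unfolding q_def by auto
    then show ?thesis by (elim disjE) (simp_all add: power2_eq_square algebra_simps)
  qed
  have "real q * real (n - q) \<le> real (card E0) + real (card Bad)"
    using cAB cAB2 by (metis of_nat_add of_nat_le_iff of_nat_mult)
  then have "(real n)^2 - 1 \<le> 4 * real (card E0) + 4 * real (card Bad)" using qq by linarith
  moreover have "4 \<le> (real n)^2"
  proof -
    have "(2::real)^2 \<le> (real n)^2" using n2 by (intro power_mono) auto
    then show ?thesis by simp
  qed
  ultimately have E0b: "(real n)^2 / 16 \<le> real (card E0)" using Badb by linarith
  define s where "s x = D (fst x) + D (snd x)" for x :: "nat \<times> nat"
  have dgs: "dg E0 CE x \<le> s x" for x
  proof -
    obtain a b where x: "x = (a,b)" by (cases x)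
    have "nb E0 CE x \<subseteq> (\<lambda>b'. (a,b')) ` {u. {u,b} \<in> P} \<union> (\<lambda>a'. (a',b)) ` {u. {u,a} \<in> P}"
    proof
      fix y assume "y \<in> nb E0 CE x"
      then have "CE x y" unfolding nb_def by simp
      obtain a' b' where y: "y = (a',b')" by (cases y)
      show "y \<in> (\<lambda>b'. (a,b')) ` {u. {u,b} \<in> P} \<union> (\<lambda>a'. (a',b)) ` {u. {u,a} \<in> P}"
        using \<open>CE x y\<close> unfolding x y CE_def by (auto simp: insert_commute)
    qed
    then have "card (nb E0 CE x) \<le> card ((\<lambda>b'. (a,b')) ` {u. {u,b} \<in> P} \<union> (\<lambda>a'. (a',b)) ` {u. {u,a} \<in> P})"
      by (rule card_mono[rotated]) (simp add: nbr_fin[OF g])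
    also have "\<dots> \<le> card ((\<lambda>b'. (a,b')) ` {u. {u,b} \<in> P}) + card ((\<lambda>a'. (a',b)) ` {u. {u,a} \<in> P})"
      by (rule card_Un_le)
    also have "\<dots> \<le> D b + D a" unfolding D_def degree_def by (intro add_mono card_image_le nbr_fin[OF g])
    finally show ?thesis unfolding dg_def s_def x by simp
  qed
  have sumAB: "(\<Sum>x\<in>A \<times> B. s x) \<le> n * (2 * e)"
  proof -
    have "(\<Sum>x\<in>A \<times> B. s x) = (\<Sum>a\<in>A. \<Sum>b\<in>B. D a + D b)"
      unfolding s_def by (simp add: sum.cartesian_product split_beta)
    also have "\<dots> = card B * (\<Sum>a\<in>A. D a) + card A * (\<Sum>b\<in>B. D b)"
      by (simp add: sum.distrib sum_distrib_left mult.commute)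
    also have "\<dots> \<le> n * (\<Sum>a\<in>A. D a) + n * (\<Sum>b\<in>B. D b)"
      using card_mono[OF _ AB(1)] card_mono[OF _ AB(2)] by (intro add_mono mult_right_mono) auto
    also have "\<dots> = n * (\<Sum>v\<in>{1..n}. D v)"
      unfolding AuB[symmetric] using AB(3) unfolding A_def B_def
      by (simp add: sum.union_disjoint distrib_left)
    finally show ?thesis using hs by simp
  qed
  have sumE0: "real (\<Sum>x\<in>E0. s x) \<le> (real n)^2 * d"
  proof -
    have "(\<Sum>x\<in>E0. s x) \<le> (\<Sum>x\<in>A \<times> B. s x)" by (rule sum_mono2[OF finAB E0AB]) simp
    then have "real (\<Sum>x\<in>E0. s x) \<le> real n * (2 * real e)" using sumAB
      by (metis (mono_tags, lifting) le_trans of_nat_le_iff of_nat_mult of_nat_numeral)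
    moreover have "real n * (2 * real e) = real n * (real n * d)" by (simp only: nd)
    moreover have "real n * (real n * d) = (real n)^2 * d" by (simp add: power2_eq_square)
    ultimately show ?thesis by linarith
  qed
  define m where "m = nat \<lfloor>32 * d\<rfloor>"
  have fl0: "0 \<le> \<lfloor>32 * d\<rfloor>" using d1' by simp
  have rm: "real m = real_of_int \<lfloor>32 * d\<rfloor>" unfolding m_def using fl0 by simp
  have m1: "real m + 1 > 32 * d" "real m \<le> 32 * d" "32 * d - 1 \<le> real m" unfolding rm
    using real_of_int_floor_add_one_gt[of "32 * d"] of_int_floor_le[of "32 * d"] by linarith+
  define L where "L = {x\<in>E0. s x \<le> m}"
  have "real (card (E0 - L)) * (real m + 1) \<le> real (\<Sum>x\<in>E0 - L. s x)"
  proof -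
    have "(\<Sum>x\<in>E0 - L. m + 1) \<le> (\<Sum>x\<in>E0 - L. s x)" by (rule sum_mono) (auto simp: L_def)
    then have "card (E0 - L) * (m + 1) \<le> (\<Sum>x\<in>E0 - L. s x)" by simp
    then have "real (card (E0 - L) * (m + 1)) \<le> real (\<Sum>x\<in>E0 - L. s x)" by (simp only: of_nat_le_iff)
    then show ?thesis by (simp add: distrib_left)
  qed
  also have "\<dots> \<le> real (\<Sum>x\<in>E0. s x)" by (subst of_nat_le_iff) (rule sum_mono2[OF finE0]; auto)
  also have "\<dots> \<le> (real n)^2 * d" by (rule sumE0)
  finally have mk: "real (card (E0 - L)) * (real m + 1) \<le> (real n)^2 * d" .
  have "real (card (E0 - L)) * (32 * d) \<le> real (card (E0 - L)) * (real m + 1)"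
    using m1 by (intro mult_left_mono) auto
  with mk have "real (card (E0 - L)) * 32 * d \<le> (real n)^2 * d" by simp
  then have EL: "real (card (E0 - L)) * 32 \<le> (real n)^2" using d1' by simp
  have LE0: "L \<subseteq> E0" unfolding L_def by auto
  have "card (E0 - L) = card E0 - card L" using finite_subset[OF LE0 finE0] LE0 by (simp add: card_Diff_subset)
  moreover have "card L \<le> card E0" using card_mono[OF finE0 LE0] .
  ultimately have "card E0 \<le> card L + card (E0 - L)" by linarith
  then have Lb: "(real n)^2 / 32 \<le> real (card L)" using E0b EL by linarith
  have "real (card L) * shf m \<le> (\<Sum>x\<in>L. shf (dg E0 CE x))"
  proof -
    have "(\<Sum>x\<in>L. shf m) \<le> (\<Sum>x\<in>L. shf (dg E0 CE x))"
    proof (rule sum_mono)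
      fix x assume "x \<in> L"
      then have "dg E0 CE x \<le> m" using dgs[of x] unfolding L_def by auto
      then show "shf m \<le> shf (dg E0 CE x)" by (rule shf_anti)
    qed
    then show ?thesis by simp
  qed
  also have "\<dots> \<le> (\<Sum>x\<in>E0. shf (dg E0 CE x))"
    by (rule sum_mono2[OF finE0]) (auto simp: L_def shf_nonneg)
  finally have v: "real (card L) * shf m \<le> real (ex_P_K3 n P)" using main by linarith
  have mpos: "1 \<le> m" using m1 d1' by linarith
  have "ln d / (64 * d) \<le> ln (real m) / (2 * real m)"
  proof -
    have "d \<le> real m" using m1 d1' by linarith
    then have "ln d \<le> ln (real m)" using d1' by simp
    moreover have "0 \<le> ln d" using d1' by simp
    ultimately have "ln d / (64 * d) \<le> ln (real m) / (64 * d)" using d1' by (simp add: divide_right_mono)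
    also have "\<dots> \<le> ln (real m) / (2 * real m)"
      using m1 mpos \<open>0 \<le> ln d\<close> \<open>ln d \<le> ln (real m)\<close> by (intro divide_left_mono) auto
    finally show ?thesis .
  qed
  also have "\<dots> \<le> shf m" by (rule shf_ln[OF mpos])
  finally have vi: "ln d / (64 * d) \<le> shf m" .
  have "(real n)^2 * ln d / (2048 * d) = ((real n)^2 / 32) * (ln d / (64 * d))" by simp
  also have "\<dots> \<le> real (card L) * shf m"
    using Lb vi d1' by (intro mult_mono) auto
  finally show ?thesis using v unfolding d_def by linarith
qed


theorem corollary1p2:
  fixes \<beta>1 \<beta>2 :: real
  assumes "\<beta>1 > 0" and "\<beta>2 > 0"
  shows "\<exists>c C :: real. c > 0 \<and> C > 0 \<and> (\<exists>n0 :: nat. \<forall>n \<ge> n0. \<forall>P.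
           graph_on n P \<and> triangle_free P \<and> constrained \<beta>1 \<beta>2 n P \<longrightarrow>
             c * (real n)^2 * ln (avg_degree n P) / avg_degree n P \<le> real (ex_P_K3 n P) \<and>
             real (ex_P_K3 n P) \<le> C * (real n)^2 * ln (avg_degree n P) / avg_degree n P)"
proof -
  have key: "1/2048 * (real n)^2 * ln (avg_degree n P) / avg_degree n P \<le> real (ex_P_K3 n P) \<and>
             real (ex_P_K3 n P) \<le> \<beta>1 / 2 * (real n)^2 * ln (avg_degree n P) / avg_degree n P"
    if n2: "2 \<le> n" and H: "graph_on n P \<and> triangle_free P \<and> constrained \<beta>1 \<beta>2 n P" for n P
  proof
    have g: "graph_on n P" and tf: "triangle_free P" and cons: "constrained \<beta>1 \<beta>2 n P" using H by auto
    define d where "d = avg_degree n P"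
    have d1: "avg_degree n P > 1"
      and al: "real (indep_number n P) \<le> \<beta>1 * real n * ln d / d"
      and cond: "real (card P) * real (max_degree n P) \<le> (1/4 - \<beta>2) * (real n)^2"
      using cons unfolding constrained_def d_def by auto
    have "(real n)^2 * ln (avg_degree n P) / (2048 * avg_degree n P) \<le> real (ex_P_K3 n P)"
      by (rule lower_bound[OF g tf n2 d1 cond assms(2)])
    then show "1/2048 * (real n)^2 * ln (avg_degree n P) / avg_degree n P \<le> real (ex_P_K3 n P)"
      by simp
    have "2 * real (ex_P_K3 n P) \<le> real n * real (indep_number n P)"
      using upper[OF g tf] by (metis of_nat_le_iff of_nat_mult of_nat_numeral)
    also have "\<dots> \<le> real n * (\<beta>1 * real n * ln d / d)" using al by (intro mult_left_mono) auto
    also have "\<dots> = 2 * (\<beta>1 / 2 * (real n)^2 * ln d / d)" by (simp add: power2_eq_square)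
    finally show "real (ex_P_K3 n P) \<le> \<beta>1 / 2 * (real n)^2 * ln (avg_degree n P) / avg_degree n P"
      unfolding d_def by linarith
  qed
  have "\<exists>n0 :: nat. \<forall>n \<ge> n0. \<forall>P.
           graph_on n P \<and> triangle_free P \<and> constrained \<beta>1 \<beta>2 n P \<longrightarrow>
             1/2048 * (real n)^2 * ln (avg_degree n P) / avg_degree n P \<le> real (ex_P_K3 n P) \<and>
             real (ex_P_K3 n P) \<le> \<beta>1 / 2 * (real n)^2 * ln (avg_degree n P) / avg_degree n P"
    using key by blast
  moreover have "(0::real) < 1/2048" "0 < \<beta>1 / 2" using assms by simp_all
  ultimately show ?thesis by blast
qed

end
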